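(* Let $\mathcal{H}>0$ be a constant such that $\|e^{-t\Delta^2}\varphi\|_{L^q}\leq\mathcal{H}t^{-\frac N4(\frac1p-\frac1q)}\|\varphi\|_{L^p}$ for all $1\leq p\leq q\leq\infty$, $t>0$, $\varphi\in L^p(\mathbb{R}^N)$. Let $N\geq9$ and $q>\frac N4$. Then for every $g\in L^1\cap L^q(\mathbb{R}^N)$, $$\|e^{-t\Delta^2}g\|_{\exp L^2}\leq\kappa(t)\big(\|g\|_{L^1}+\|g\|_{L^q}\big)\quad\text{for all }t>0,$$ where $$\kappa(t)=\frac{2\mathcal{H}}{\sqrt{\log2}}\min\Big\{t^{-\frac{N}{4q}}+1,\ t^{-\frac N4}\big(\log(t^{-\frac N4}+1)\big)^{-1/2}\Big\},$$ and $\kappa\in L^1(0,\infty)$.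
   Context: $e^{-t\Delta^2}$ denotes the biharmonic heat semigroup on $\mathbb{R}^N$: $e^{-t\Delta^2}\varphi=E_t\star\varphi$ with $E_t(x)=(2\pi)^{-N}\int_{\mathbb{R}^N}e^{-t|\xi|^4}e^{ix\cdot\xi}\,d\xi$. The Orlicz space $\exp L^2(\mathbb{R}^N)$ is the set of $u\in L^1_{loc}(\mathbb{R}^N)$ such that $\int_{\mathbb{R}^N}(e^{|u(x)|^2/\alpha^2}-1)\,dx<\infty$ for some $\alpha>0$, with the Luxemburg norm $\|u\|_{\exp L^2}=\inf\{\alpha>0:\int_{\mathbb{R}^N}(e^{|u(x)|^2/\alpha^2}-1)\,dx\leq 1\}$. *)

theory Defs
  imports "HOL-Analysis.Analysis"
begin

definition biharm_kernel :: "real \<Rightarrow> 'a::euclidean_space \<Rightarrow> complex" where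
  "biharm_kernel t x =
     complex_of_real ((2 * pi) powr (- real DIM('a))) *
     (\<integral> \<xi>. complex_of_real (exp (- t * norm \<xi> ^ 4)) * cis (x \<bullet> \<xi>) \<partial>lebesgue)"

definition biharm_heat :: "real \<Rightarrow> ('a::euclidean_space \<Rightarrow> real) \<Rightarrow> 'a \<Rightarrow> complex" where
  "biharm_heat t \<phi> x = (\<integral> y. biharm_kernel t (x - y) * complex_of_real (\<phi> y) \<partial>lebesgue)"

definition Lp_norm :: "ereal \<Rightarrow> ('a::euclidean_space \<Rightarrow> 'b::real_normed_vector) \<Rightarrow> ennreal" where
  "Lp_norm p f =
     (if p = \<infinity> then Inf {C. AE x in lebesgue. ennreal (norm (f x)) \<le> C}
      else (let I = (\<integral>\<^sup>+ x. ennreal (norm (f x) powr real_of_ereal p) \<partial>lebesgue)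
            in if I = \<infinity> then \<infinity> else ennreal (enn2real I powr (1 / real_of_ereal p))))"

definition in_Lp :: "ereal \<Rightarrow> ('a::euclidean_space \<Rightarrow> 'b::real_normed_vector) \<Rightarrow> bool" where
  "in_Lp p f \<longleftrightarrow> f \<in> borel_measurable lebesgue \<and> Lp_norm p f < \<infinity>"

definition inv_exp :: "ereal \<Rightarrow> real" where
  "inv_exp p = (if p = \<infinity> then 0 else 1 / real_of_ereal p)"

text \<open>Luxemburg norm of exp L^2 (value \<infinity> if no admissible alpha exists).\<close>
definition expL2_norm :: "('a::euclidean_space \<Rightarrow> 'b::real_normed_vector) \<Rightarrow> ennreal" where
  "expL2_norm u = Inf {ennreal \<alpha> | \<alpha>. \<alpha> > 0 \<and>
      (\<integral>\<^sup>+ x. ennreal (exp (norm (u x) ^ 2 / \<alpha> ^ 2) - 1) \<partial>lebesgue) \<le> 1}"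

definition kappa :: "real \<Rightarrow> real \<Rightarrow> real \<Rightarrow> real \<Rightarrow> real" where
  "kappa H N q t = 2 * H / sqrt (ln 2) *
     min (t powr (- N / (4 * q)) + 1)
         (t powr (- N / 4) * (ln (t powr (- N / 4) + 1)) powr (- 1 / 2))"

end

theory Submission
  imports Defs
begin


lemma ln_lower: "0 \<le> (x::real) \<Longrightarrow> x / (1 + x) \<le> ln (1 + x)"
proof -
  assume x: "0 \<le> x"
  have "ln (1 / (1 + x)) \<le> 1 / (1 + x) - 1" by (rule ln_le_minus_one) (use x in auto)
  moreover have "ln (1 / (1 + x)) = - ln (1 + x)" using x by (simp add: ln_div)
  moreover have "1 / (1 + x) - 1 = - (x / (1 + x))" using x by (simp add: field_simps)
  ultimately show ?thesis by linarith
qed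

lemma kappa_meas: "kappa H N q \<in> borel_measurable borel"
  unfolding kappa_def by measurable

lemma kappa_pos: assumes "H > 0" "t > 0" shows "kappa H N q t > 0"
proof -
  have "t powr (- N / 4) > 0" using assms by simp
  then have "ln (t powr (- N / 4) + 1) > 0" by (intro ln_gt_zero) linarith
  then show ?thesis using assms unfolding kappa_def
    by (intro mult_pos_pos divide_pos_pos) (auto simp: min_def add_pos_nonneg)
qed

lemma kappa_le1:
  assumes "H > 0" "0 < t" "t \<le> 1" "N \<ge> 0" "q > 0"
  shows "kappa H N q t \<le> 2 * (2 * H / sqrt (ln 2)) * t powr (- N / (4 * q))"
proof -
  have e: "- N / (4 * q) \<le> 0" using assms by (simp add: divide_nonpos_pos)
  have "t powr 0 \<le> t powr (- N / (4 * q))"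
    using assms by (intro powr_mono' e) auto
  then have 1: "1 \<le> t powr (- N / (4 * q))" using assms by simp
  have c: "2 * H / sqrt (ln 2) > 0" using assms by simp
  have "kappa H N q t \<le> 2 * H / sqrt (ln 2) * (t powr (- N / (4 * q)) + 1)"
    unfolding kappa_def using c by (intro mult_left_mono) auto
  also have "\<dots> \<le> 2 * H / sqrt (ln 2) * (2 * t powr (- N / (4 * q)))"
    using c 1 by (intro mult_left_mono) auto
  finally show ?thesis by simp
qed

lemma kappa_ge1:
  assumes "H > 0" "1 \<le> t" "N > 0"
  shows "kappa H N q t \<le> (2 * H / sqrt (ln 2)) * sqrt 2 * t powr (- N / 8)"
proof -
  define T where "T = t powr (- N / 4)"
  have T0: "T > 0" using assms by (simp add: T_def)
  have "T \<le> t powr 0" unfolding T_def using assms by (intro powr_mono) auto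
  then have T1: "T \<le> 1" using assms by simp
  have c: "2 * H / sqrt (ln 2) > 0" using assms by simp
  have l: "T / 2 \<le> ln (T + 1)"
  proof -
    have "T / 2 \<le> T / (1 + T)" using T0 T1 by (intro divide_left_mono) auto
    also have "\<dots> \<le> ln (1 + T)" by (rule ln_lower) (use T0 in auto)
    finally show ?thesis by (simp add: add.commute)
  qed
  have "ln (T + 1) powr (- 1 / 2) \<le> (T / 2) powr (- 1 / 2)"
    by (rule powr_mono2') (use l T0 in auto)
  then have "T * ln (T + 1) powr (- 1 / 2) \<le> T * (T / 2) powr (- 1 / 2)"
    using T0 by (intro mult_left_mono) auto
  also have "T * (T / 2) powr (- 1 / 2) = sqrt 2 * T powr (1/2)"
  proof -
    have a: "(T/2) powr (-1/2) = 1 / sqrt (T/2)" using T0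
      by (simp add: powr_minus_divide powr_half_sqrt[symmetric] powr_minus)
    have b: "T = sqrt T * sqrt T" using T0 by simp
    have "T * (1 / sqrt (T/2)) = sqrt 2 * sqrt T" using T0
      by (subst b) (simp add: real_sqrt_divide field_simps)
    then show ?thesis using a T0 by (simp add: powr_half_sqrt)
  qed
  also have "T powr (1/2) = t powr (- N / 8)"
    unfolding T_def using assms by (simp add: powr_powr)
  finally have "T * ln (T + 1) powr (- 1 / 2) \<le> sqrt 2 * t powr (- N / 8)" .
  then have "kappa H N q t \<le> 2 * H / sqrt (ln 2) * (sqrt 2 * t powr (- N / 8))"
    unfolding kappa_def T_def[symmetric] using c
    by (intro mult_left_mono) (auto simp: min_def)
  then show ?thesis by (simp add: mult.assoc)
qed

lemma kappa_integrable:
  assumes H: "H > 0" and N: "N \<ge> 9" and q: "q > N / 4"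
  shows "set_integrable lborel {0<..} (kappa H N q)"
proof -
  define c where "c = 2 * H / sqrt (ln 2)"
  have qpos: "q > 0" using N q by linarith
  have I1: "set_integrable lborel {0<..1} (kappa H N q)"
  proof (rule set_integrable_bound[where f = "\<lambda>t. 2 * c * t powr (- N / (4 * q))"])
    have e: "- N / (4 * q) > -1" using q qpos by (simp add: field_simps)
    have "(\<lambda>t. t powr (- N / (4 * q))) integrable_on {0<..1}"
      by (rule integrable_on_powr_from_0') (use e in auto)
    hence "(\<lambda>t. t powr (- N / (4 * q))) absolutely_integrable_on {0<..1}"
      by (subst absolutely_integrable_on_iff_nonneg) auto
    from integrable_mult_right[OF this [unfolded set_integrable_def], of "2 * c"]
    show "set_integrable lborel {0<..1} (\<lambda>t. 2 * c * t powr (- N / (4 * q)))"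
      unfolding set_integrable_def
      by (subst (asm) integrable_completion) (auto simp: mult_ac)
    show "set_borel_measurable lborel {0<..1} (kappa H N q)"
      unfolding set_borel_measurable_def using kappa_meas by measurable
    show "AE x in lborel. x \<in> {0<..1} \<longrightarrow> norm (kappa H N q x) \<le> norm (2 * c * x powr (- N / (4 * q)))"
    proof (intro AE_I2 impI)
      fix x :: real assume x: "x \<in> {0<..1}"
      have "norm (kappa H N q x) = kappa H N q x" using kappa_pos[OF H, of x N q] x by simp
      also have "\<dots> \<le> 2 * c * x powr (- N / (4 * q))"
        using kappa_le1[OF H, of x N q] x N qpos by (simp add: c_def)
      also have "\<dots> \<le> norm (2 * c * x powr (- N / (4 * q)))" by simp
      finally show "norm (kappa H N q x) \<le> norm (2 * c * x powr (- N / (4 * q)))" .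
    qed
  qed
  have I2: "set_integrable lborel {1..} (kappa H N q)"
  proof (rule set_integrable_bound[where f = "\<lambda>t. c * sqrt 2 * t powr (- N / 8)"])
    have e: "- N / 8 < -1" using N by simp
    have "(\<lambda>t. t powr (- N / 8)) integrable_on {1..}"
      using has_integral_powr_to_inf[OF e, of 1] by (auto simp: integrable_on_def)
    hence "(\<lambda>t. t powr (- N / 8)) absolutely_integrable_on {1..}"
      by (subst absolutely_integrable_on_iff_nonneg) auto
    from integrable_mult_right[OF this [unfolded set_integrable_def], of "c * sqrt 2"]
    show "set_integrable lborel {1..} (\<lambda>t. c * sqrt 2 * t powr (- N / 8))"
      unfolding set_integrable_def
      by (subst (asm) integrable_completion) (auto simp: mult_ac)
    show "set_borel_measurable lborel {1..} (kappa H N q)"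
      unfolding set_borel_measurable_def using kappa_meas by measurable
    show "AE x in lborel. x \<in> {1..} \<longrightarrow> norm (kappa H N q x) \<le> norm (c * sqrt 2 * x powr (- N / 8))"
    proof (intro AE_I2 impI)
      fix x :: real assume x: "x \<in> {1..}"
      have "norm (kappa H N q x) = kappa H N q x" using kappa_pos[OF H, of x N q] x by simp
      also have "\<dots> \<le> c * sqrt 2 * x powr (- N / 8)"
        using kappa_ge1[OF H, of x N q] x N by (simp add: c_def)
      also have "\<dots> \<le> norm (c * sqrt 2 * x powr (- N / 8))" by simp
      finally show "norm (kappa H N q x) \<le> norm (c * sqrt 2 * x powr (- N / 8))" .
    qed
  qed
  have "set_integrable lborel ({0<..1} \<union> {1..}) (kappa H N q)"
    by (rule set_integrable_Un[OF I1 I2]) auto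
  moreover have "{0<..1} \<union> {1..} = ({0<..} :: real set)" by auto
  ultimately show ?thesis by simp
qed



lemma nn_integral_cmult_le:
  assumes c: "0 \<le> c"
  shows "(\<integral>\<^sup>+x. ennreal c * f x \<partial>M) \<le> ennreal c * integral\<^sup>N M f"
proof (cases "c = 0")
  case True then show ?thesis by simp
next
  case False
  with c have c: "0 < c" by simp
  show ?thesis
    unfolding nn_integral_def
  proof (rule SUP_least)
    fix g assume g: "g \<in> {g. simple_function M g \<and> g \<le> (\<lambda>x. ennreal c * f x)}"
    define g' where "g' x = ennreal (1/c) * g x" for x
    have sg': "simple_function M g'"
      unfolding g'_def using g by (intro simple_function_compose1[where g="\<lambda>y. ennreal (1/c) * y"]) auto
    have one: "ennreal (1/c) * ennreal c = 1" using c by (simp flip: ennreal_mult)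
    have "g' \<le> f"
    proof (rule le_funI)
      fix x
      have "g x \<le> ennreal c * f x" using g by (auto simp: le_fun_def)
      then have "g' x \<le> ennreal (1/c) * (ennreal c * f x)" unfolding g'_def by (rule mult_left_mono) simp
      also have "\<dots> = f x" by (simp add: mult.assoc[symmetric] one)
      finally show "g' x \<le> f x" .
    qed
    have geq: "g = (\<lambda>x. ennreal c * g' x)"
      by (rule ext) (simp add: g'_def mult.assoc[symmetric] one[unfolded mult.commute[of "ennreal (1/c)"]])
    have "integral\<^sup>S M g = ennreal c * integral\<^sup>S M g'"
      by (subst geq) (simp add: sg')
    also have "\<dots> \<le> ennreal c * (SUP g \<in> {g. simple_function M g \<and> g \<le> f}. integral\<^sup>S M g)"
      by (intro mult_left_mono SUP_upper) (use sg' \<open>g' \<le> f\<close> in auto)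
    finally show "integral\<^sup>S M g \<le> ennreal c * (SUP g \<in> {g. simple_function M g \<and> g \<le> f}. integral\<^sup>S M g)" .
  qed
qed

lemma Lp_inf_AE: "AE x in lebesgue. ennreal (norm (f x)) \<le> Lp_norm \<infinity> f"
proof -
  define S where "S = {C. AE x in lebesgue. ennreal (norm (f x)) \<le> C}"
  have LI: "Lp_norm \<infinity> f = Inf S" unfolding Lp_norm_def S_def by simp
  show ?thesis
  proof (cases "Inf S = top")
    case True then show ?thesis by (simp add: LI True)
  next
    case False
    then obtain r where r: "Inf S = ennreal r" "0 \<le> r" by (cases "Inf S" rule: ennreal_cases) auto
    have "\<forall>n::nat. AE x in lebesgue. ennreal (norm (f x)) \<le> ennreal (r + 1 / Suc n)"
    proof
      fix n :: nat
      have "Inf S < ennreal (r + 1 / Suc n)" using r by (simp add: ennreal_less_iff)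
      then obtain C where "C \<in> S" "C < ennreal (r + 1 / Suc n)" by (auto simp: Inf_less_iff)
      then show "AE x in lebesgue. ennreal (norm (f x)) \<le> ennreal (r + 1 / Suc n)"
        unfolding S_def by (auto elim!: eventually_mono)
    qed
    then have "AE x in lebesgue. \<forall>n::nat. ennreal (norm (f x)) \<le> ennreal (r + 1 / Suc n)"
      by (simp add: AE_all_countable)
    then show ?thesis
    proof (rule eventually_mono)
      fix x assume h: "\<forall>n::nat. ennreal (norm (f x)) \<le> ennreal (r + 1 / Suc n)"
      have "norm (f x) \<le> r"
      proof (rule field_le_epsilon)
        fix e :: real assume e: "0 < e"
        obtain m :: nat where m: "m > 0" "inverse (real m) < e" using ex_inverse_of_nat_less[OF e] by auto
        define n where "n = m - 1"
        have mn: "Suc n = m" using m by (simp add: n_def)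
        have n: "inverse (real (Suc n)) < e" using m by (simp only: mn)
        have "ennreal (norm (f x)) \<le> ennreal (r + 1 / Suc n)" using h by blast
        moreover have "0 \<le> r + 1 / Suc n" using r by simp
        ultimately have "norm (f x) \<le> r + 1 / Suc n" by (simp only: ennreal_le_iff)
        moreover have "1 / real (Suc n) < e" using n by (simp only: inverse_eq_divide)
        ultimately show "norm (f x) \<le> r + e" by linarith
      qed
      then show "ennreal (norm (f x)) \<le> Lp_norm \<infinity> f" by (simp add: LI r)
    qed
  qed
qed

lemma Lp_one: "Lp_norm 1 f = (\<integral>\<^sup>+x. ennreal (norm (f x)) \<partial>lebesgue)"
proof -
  have p: "(\<lambda>x. ennreal (norm (f x) powr real_of_ereal 1)) = (\<lambda>x. ennreal (norm (f x)))"
    by (simp add: powr_one)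
  show ?thesis unfolding Lp_norm_def p Let_def
    by (auto simp: powr_one enn2real_nonneg ennreal_enn2real_if)
qed

lemma pointwise:
  fixes y M \<alpha> :: real
  assumes "0 \<le> y" "y \<le> M" "0 < M" "0 < \<alpha>"
  shows "exp (y^2/\<alpha>^2) - 1 \<le> (exp (M^2/\<alpha>^2) - 1) / M * y"
proof -
  define l where "l = y / M"
  define z where "z = M^2/\<alpha>^2"
  have l: "0 \<le> l" "l \<le> 1" using assms by (auto simp: l_def field_simps)
  have z: "0 \<le> z" by (simp add: z_def)
  have yz: "y^2/\<alpha>^2 = l^2 * z" using assms by (simp add: l_def z_def field_simps power2_eq_square)
  have "l^2 * z \<le> l * z" using l z by (intro mult_right_mono) (auto simp: power2_eq_square mult_left_le_one_le)
  then have "exp (y^2/\<alpha>^2) \<le> exp (l * z)" by (simp add: yz)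
  also have "exp (l * z) = exp ((1 - l) *\<^sub>R 0 + l *\<^sub>R z)" by simp
  also have "\<dots> \<le> (1 - l) * exp 0 + l * exp z"
    by (rule convex_onD[OF exp_convex]) (use l in auto)
  finally have "exp (y^2/\<alpha>^2) - 1 \<le> l * (exp z - 1)" by (simp add: algebra_simps)
  then show ?thesis using assms by (simp add: l_def z_def field_simps)
qed

lemma core:
  fixes u :: "'a::euclidean_space \<Rightarrow> 'b::real_normed_vector"
  assumes M: "0 < M" and AE: "AE x in lebesgue. norm (u x) \<le> M"
    and L: "(\<integral>\<^sup>+x. ennreal (norm (u x)) \<partial>lebesgue) \<le> ennreal L" and L0: "0 \<le> L"
    and al: "0 < \<alpha>" and cond: "L * (exp (M^2/\<alpha>^2) - 1) \<le> M"
  shows "expL2_norm u \<le> ennreal \<alpha>"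
proof -
  define C where "C = (exp (M^2/\<alpha>^2) - 1) / M"
  have C0: "0 \<le> C" unfolding C_def using M by (intro divide_nonneg_pos) auto
  have "(\<integral>\<^sup>+x. ennreal (exp (norm (u x)^2/\<alpha>^2) - 1) \<partial>lebesgue)
      \<le> (\<integral>\<^sup>+x. ennreal C * ennreal (norm (u x)) \<partial>lebesgue)"
  proof (rule nn_integral_mono_AE)
    show "AE x in lebesgue. ennreal (exp (norm (u x)^2/\<alpha>^2) - 1) \<le> ennreal C * ennreal (norm (u x))"
      using AE
    proof (rule eventually_mono)
      fix x assume "norm (u x) \<le> M"
      then have "exp (norm (u x)^2/\<alpha>^2) - 1 \<le> C * norm (u x)"
        unfolding C_def using pointwise[of "norm (u x)" M \<alpha>] M al by simp
      then show "ennreal (exp (norm (u x)^2/\<alpha>^2) - 1) \<le> ennreal C * ennreal (norm (u x))"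
        using C0 by (simp add: ennreal_mult[symmetric] ennreal_leI)
    qed
  qed
  also have "\<dots> \<le> ennreal C * (\<integral>\<^sup>+x. ennreal (norm (u x)) \<partial>lebesgue)"
    by (rule nn_integral_cmult_le[OF C0])
  also have "\<dots> \<le> ennreal C * ennreal L" by (rule mult_left_mono[OF L]) simp
  also have "\<dots> = ennreal (C * L)" using C0 L0 by (simp add: ennreal_mult)
  also have "\<dots> \<le> 1"
  proof -
    have "C * L = L * (exp (M^2/\<alpha>^2) - 1) / M" unfolding C_def by simp
    also have "\<dots> \<le> 1" using cond M by (simp add: divide_le_eq)
    finally show ?thesis by (simp add: ennreal_le_1)
  qed
  finally have I: "(\<integral>\<^sup>+x. ennreal (exp (norm (u x)^2/\<alpha>^2) - 1) \<partial>lebesgue) \<le> 1" .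
  show ?thesis unfolding expL2_norm_def
    by (rule Inf_lower) (use al I in blast)
qed

lemma core0:
  fixes u :: "'a::euclidean_space \<Rightarrow> 'b::real_normed_vector"
  assumes AE: "AE x in lebesgue. norm (u x) \<le> 0"
  shows "expL2_norm u \<le> z"
proof -
  have "expL2_norm u \<le> 0"
  proof (rule ennreal_le_epsilon)
    fix e :: real assume e: "0 < e"
    have "AE x in lebesgue. ennreal (exp (norm (u x)^2/e^2) - 1) = 0"
      using AE by (auto elim!: eventually_mono)
    from nn_integral_cong_AE[OF this] have I: "(\<integral>\<^sup>+x. ennreal (exp (norm (u x)^2/e^2) - 1) \<partial>lebesgue) \<le> 1" by simp
    have "expL2_norm u \<le> ennreal e" unfolding expL2_norm_def
      by (rule Inf_lower) (use e I in blast)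
    then show "expL2_norm u \<le> 0 + ennreal e" by simp
  qed
  then show ?thesis by simp
qed

lemma exp_bound: "0 \<le> (x::real) \<Longrightarrow> x \<le> ln 2 \<Longrightarrow> exp x - 1 \<le> 2 * x"
proof -
  assume x: "0 \<le> x" "x \<le> ln 2"
  have "1 - x \<le> exp (- x)" using exp_ge_add_one_self[of "-x"] by simp
  then have "exp x * (1 - x) \<le> exp x * exp (-x)" by (intro mult_left_mono) auto
  then have a: "exp x - 1 \<le> x * exp x" by (simp add: exp_minus algebra_simps)
  have "exp x \<le> 2" using x exp_le_cancel_iff[of x "ln 2"] by simp
  then have "x * exp x \<le> x * 2" using x by (intro mult_left_mono) auto
  with a show ?thesis by simp
qed



lemma boundX:
  fixes u :: "'a::euclidean_space \<Rightarrow> 'b::real_normed_vector"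
  assumes H: "H > 0" and a: "a \<ge> 0" and b: "b \<ge> 0" and S: "S > 0"
    and AE: "AE x in lebesgue. norm (u x) \<le> H * S * b"
    and L: "(\<integral>\<^sup>+x. ennreal (norm (u x)) \<partial>lebesgue) \<le> ennreal (H * a)"
  shows "expL2_norm u \<le> ennreal (2 * H / sqrt (ln 2) * (S + 1) * (a + b))"
proof (cases "b = 0")
  case True
  then show ?thesis by (intro core0) (use AE in simp)
next
  case False
  with b have b: "b > 0" by simp
  define c where "c = 2 * H / sqrt (ln 2)"
  have c: "c > 0" using H by (simp add: c_def)
  define M where "M = H * S * b"
  define \<alpha> where "\<alpha> = c * (S + 1) * (a + b)"
  define r where "r = S * b / ((S + 1) * (a + b))"
  have M: "M > 0" using H S b by (simp add: M_def)
  have al: "\<alpha> > 0" using c S a b by (simp add: \<alpha>_def add_pos_nonneg)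
  have r0: "0 \<le> r" using S a b by (simp add: r_def)
  have r1: "r \<le> 1" unfolding r_def using S a b
    by (subst divide_le_eq_1) (auto intro!: mult_mono add_pos_nonneg)
  have l2: "0 < ln (2::real)" "ln (2::real) \<le> 1" using ln_le_minus_one[of 2] by auto
  have Ma: "M / \<alpha> = sqrt (ln 2) / 2 * r"
  proof -
    have p: "(S + 1) * (a + b) > 0" using S a b by (simp add: add_pos_nonneg)
    have "M / \<alpha> = (H * S * b) / (2 * H / sqrt (ln 2) * ((S + 1) * (a + b)))"
      by (simp add: M_def \<alpha>_def c_def mult.assoc)
    also have "\<dots> = sqrt (ln 2) / 2 * (S * b / ((S + 1) * (a + b)))"
    proof -
      have g: "\<And>D s. D > 0 \<Longrightarrow> s > 0 \<Longrightarrow> (H * S * b) / (2 * H / s * D) = s / 2 * (S * b / D)"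
        using H by (simp add: field_simps)
      show ?thesis by (rule g) (use p l2 in auto)
    qed
    finally show ?thesis by (simp add: r_def)
  qed
  have x: "M^2/\<alpha>^2 = ln 2 / 4 * r^2"
  proof -
    have "M^2/\<alpha>^2 = (sqrt (ln 2) / 2 * r)^2" by (simp add: power_divide[symmetric] Ma)
    also have "\<dots> = (sqrt (ln 2))^2 / 4 * r^2" by (simp add: power_mult_distrib power_divide)
    also have "(sqrt (ln 2))^2 = ln (2::real)" using l2 by simp
    finally show ?thesis .
  qed
  have x0: "0 \<le> M^2/\<alpha>^2" by simp
  have "r^2 \<le> 1" using r0 r1 by (simp add: power_le_one)
  then have "ln 2 / 4 * r^2 \<le> ln 2 / 4 * 1" by (rule mult_left_mono) (use l2 in auto)
  then have "ln 2 / 4 * r^2 \<le> ln 2" using l2 by linarith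
  then have "exp (M^2/\<alpha>^2) - 1 \<le> 2 * (M^2/\<alpha>^2)" by (intro exp_bound x0) (simp add: x)
  then have "H * a * (exp (M^2/\<alpha>^2) - 1) \<le> H * a * (2 * (ln 2 / 4 * r^2))"
    using H a by (intro mult_left_mono) (auto simp: x)
  also have "\<dots> \<le> H * a * r"
  proof -
    have "r^2 \<le> r" using r0 r1 by (simp add: power2_eq_square mult_left_le_one_le)
    have "ln 2 * r^2 \<le> 1 * r" by (rule mult_mono) (use l2 r0 \<open>r^2 \<le> r\<close> in auto)
    moreover have "2 * (ln 2 / 4 * r^2) = (ln 2 * r^2) / 2" by simp
    ultimately have "2 * (ln 2 / 4 * r^2) \<le> r" using r0 by linarith
    then show ?thesis using H a by (intro mult_left_mono) auto
  qed
  also have "\<dots> \<le> M"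
  proof -
    have "a * r = S * b * (a / ((S + 1) * (a + b)))" by (simp add: r_def)
    also have "\<dots> \<le> S * b * 1"
    proof (intro mult_left_mono)
      have "a \<le> 1 * (a + b)" using b by simp
      also have "\<dots> \<le> (S + 1) * (a + b)" using S a b by (intro mult_right_mono) auto
      finally show "a / ((S + 1) * (a + b)) \<le> 1" using S a b by (simp add: divide_le_eq_1)
    qed (use S b in auto)
    finally show ?thesis using H by (simp add: M_def mult.assoc)
  qed
  finally have cond: "H * a * (exp (M^2/\<alpha>^2) - 1) \<le> M" .
  have "expL2_norm u \<le> ennreal \<alpha>"
    by (rule core[OF M _ L _ al cond]) (use AE H a in \<open>simp_all add: M_def\<close>)
  then show ?thesis by (simp add: \<alpha>_def c_def)
qed

lemma boundY:
  fixes u :: "'a::euclidean_space \<Rightarrow> 'b::real_normed_vector"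
  assumes H: "H > 0" and a: "a \<ge> 0" and b: "b \<ge> 0" and T: "T > 0"
    and AE: "AE x in lebesgue. norm (u x) \<le> H * T * a"
    and L: "(\<integral>\<^sup>+x. ennreal (norm (u x)) \<partial>lebesgue) \<le> ennreal (H * a)"
  shows "expL2_norm u \<le> ennreal (2 * H / sqrt (ln 2) * (T * ln (T + 1) powr (- 1 / 2)) * (a + b))"
proof (cases "a = 0")
  case True
  then show ?thesis by (intro core0) (use AE in simp)
next
  case False
  with a have a: "a > 0" by simp
  define c where "c = 2 * H / sqrt (ln 2)"
  have c: "c > 0" using H by (simp add: c_def)
  define l where "l = ln (T + 1)"
  have l: "l > 0" unfolding l_def using T by (intro ln_gt_zero) simp
  have lp: "l powr (- 1 / 2) = 1 / sqrt l" using l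
    by (simp add: powr_minus_divide powr_half_sqrt[symmetric] powr_minus)
  define M where "M = H * T * a"
  define \<alpha> where "\<alpha> = c * (T * l powr (- 1 / 2)) * (a + b)"
  define \<rho> where "\<rho> = a / (a + b)"
  have M: "M > 0" using H T a by (simp add: M_def)
  have al: "\<alpha> > 0" using c T a b l by (simp add: \<alpha>_def add_pos_nonneg)
  have r0: "0 \<le> \<rho>" using a b by (simp add: \<rho>_def)
  have r1: "\<rho> \<le> 1" unfolding \<rho>_def using a b by (simp add: divide_le_eq_1)
  have l2: "0 < ln (2::real)" "ln (2::real) \<le> 1" using ln_le_minus_one[of 2] by auto
  have Ma: "M / \<alpha> = sqrt (ln 2) / 2 * sqrt l * \<rho>"
  proof -
    have g: "\<And>D s m. D > 0 \<Longrightarrow> s > 0 \<Longrightarrow> m > 0 \<Longrightarrow>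
        (H * T * a) / (2 * H / s * (T * (1 / m)) * D) = s / 2 * m * (a / D)"
      using H T by (simp add: field_simps)
    have "M / \<alpha> = (H * T * a) / (2 * H / sqrt (ln 2) * (T * (1 / sqrt l)) * (a + b))"
      unfolding M_def \<alpha>_def c_def lp by simp
    also have "\<dots> = sqrt (ln 2) / 2 * sqrt l * (a / (a + b))"
      by (rule g) (use a b l l2 in auto)
    finally show ?thesis by (simp add: \<rho>_def)
  qed
  have x: "M^2/\<alpha>^2 = ln 2 / 4 * l * \<rho>^2"
  proof -
    have "M^2/\<alpha>^2 = (sqrt (ln 2) / 2 * sqrt l * \<rho>)^2" by (simp add: power_divide[symmetric] Ma)
    also have "\<dots> = (sqrt (ln 2))^2 / 4 * (sqrt l)^2 * \<rho>^2" by (simp add: power_mult_distrib power_divide)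
    also have "(sqrt (ln 2))^2 = ln (2::real)" using l2 by simp
    also have "(sqrt l)^2 = l" using l by simp
    finally show ?thesis .
  qed
  have "\<rho>^2 \<le> 1" using r0 r1 by (simp add: power_le_one)
  then have "ln 2 / 4 * l * \<rho>^2 \<le> ln 2 / 4 * l * 1" by (rule mult_left_mono) (use l2 l in auto)
  also have "\<dots> = (ln 2 / 4) * l" by simp
  also have "\<dots> \<le> 1 * l" using l2 l by (intro mult_right_mono) auto
  finally have "M^2/\<alpha>^2 \<le> l" by (simp add: x)
  then have "exp (M^2/\<alpha>^2) \<le> exp l" by simp
  also have "exp l = T + 1" using T by (simp add: l_def)
  finally have "exp (M^2/\<alpha>^2) - 1 \<le> T" by simp
  then have cond: "H * a * (exp (M^2/\<alpha>^2) - 1) \<le> M"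
    using H a by (simp add: M_def mult.commute[of _ T] mult.assoc mult_left_mono)
  have "expL2_norm u \<le> ennreal \<alpha>"
    by (rule core[OF M _ L _ al cond]) (use AE H a in \<open>simp_all add: M_def\<close>)
  then show ?thesis by (simp add: \<alpha>_def c_def l_def)
qed



theorem corollary3p5:
  fixes H :: real and q :: real and g :: "'a::euclidean_space \<Rightarrow> real"
  assumes H_pos: "H > 0"
    and H_est: "\<And>p r t (\<phi> :: 'a \<Rightarrow> real).
        1 \<le> p \<Longrightarrow> p \<le> r \<Longrightarrow> t > 0 \<Longrightarrow> in_Lp p \<phi> \<Longrightarrow>
        Lp_norm r (biharm_heat t \<phi>)
          \<le> ennreal (H * t powr (- real DIM('a) / 4 * (inv_exp p - inv_exp r))) * Lp_norm p \<phi>"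
    and N: "DIM('a) \<ge> 9"
    and q: "q > real DIM('a) / 4"
    and g1: "in_Lp 1 g" and gq: "in_Lp (ereal q) g"
  shows "(\<forall>t>0. expL2_norm (biharm_heat t g)
            \<le> ennreal (kappa H (real DIM('a)) q t) * (Lp_norm 1 g + Lp_norm (ereal q) g))
         \<and> set_integrable lborel {0<..} (kappa H (real DIM('a)) q)"
proof
  define n where "n = real DIM('a)"
  have n9: "n \<ge> 9" using N by (simp add: n_def)
  have qn: "q > n / 4" using q by (simp add: n_def)
  have q1: "q > 1" using n9 qn by linarith
  show "set_integrable lborel {0<..} (kappa H (real DIM('a)) q)"
    using kappa_integrable[OF H_pos n9 qn] by (simp add: n_def)
  obtain a where a: "Lp_norm 1 g = ennreal a" "0 \<le> a"
    using g1 unfolding in_Lp_def by (cases "Lp_norm 1 g" rule: ennreal_cases) auto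
  obtain b where b: "Lp_norm (ereal q) g = ennreal b" "0 \<le> b"
    using gq unfolding in_Lp_def by (cases "Lp_norm (ereal q) g" rule: ennreal_cases) auto
  show "\<forall>t>0. expL2_norm (biharm_heat t g)
            \<le> ennreal (kappa H (real DIM('a)) q t) * (Lp_norm 1 g + Lp_norm (ereal q) g)"
  proof (intro allI impI)
    fix t :: real assume t: "t > 0"
    define u where "u = biharm_heat t g"
    have ie1: "inv_exp 1 = 1" by (simp add: inv_exp_def)
    have ieinf: "inv_exp \<infinity> = 0" by (simp add: inv_exp_def)
    have ieq: "inv_exp (ereal q) = 1 / q" by (simp add: inv_exp_def)
    have E1: "Lp_norm 1 u \<le> ennreal (H * a)"
      using H_est[of 1 1 t g] t g1 a H_pos by (simp add: u_def ie1 ennreal_mult)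
    then have L: "(\<integral>\<^sup>+x. ennreal (norm (u x)) \<partial>lebesgue) \<le> ennreal (H * a)"
      by (simp add: Lp_one)
    have E2: "Lp_norm \<infinity> u \<le> ennreal (H * t powr (- n / 4) * a)"
      using H_est[of 1 \<infinity> t g] t g1 a H_pos by (simp add: u_def ie1 ieinf n_def ennreal_mult)
    have E3: "Lp_norm \<infinity> u \<le> ennreal (H * t powr (- n / (4 * q)) * b)"
    proof -
      have "- n / 4 * (1 / q - 0) = - n / (4 * q)" by simp
      then show ?thesis
        using H_est[of "ereal q" \<infinity> t g] t gq b H_pos q1 by (simp add: u_def ieq ieinf n_def ennreal_mult)
    qed
    have AE2: "AE x in lebesgue. norm (u x) \<le> H * t powr (- n / 4) * a"
      using Lp_inf_AE[of u]
    proof (rule eventually_mono)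
      fix x assume "ennreal (norm (u x)) \<le> Lp_norm \<infinity> u"
      then have "ennreal (norm (u x)) \<le> ennreal (H * t powr (- n / 4) * a)" using E2 by simp
      then show "norm (u x) \<le> H * t powr (- n / 4) * a"
        using H_pos a by (subst (asm) ennreal_le_iff) auto
    qed
    have AE3: "AE x in lebesgue. norm (u x) \<le> H * t powr (- n / (4 * q)) * b"
      using Lp_inf_AE[of u]
    proof (rule eventually_mono)
      fix x assume "ennreal (norm (u x)) \<le> Lp_norm \<infinity> u"
      then have "ennreal (norm (u x)) \<le> ennreal (H * t powr (- n / (4 * q)) * b)" using E3 by simp
      then show "norm (u x) \<le> H * t powr (- n / (4 * q)) * b"
        using H_pos b by (subst (asm) ennreal_le_iff) auto
    qed
    define c where "c = 2 * H / sqrt (ln 2)"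
    define X where "X = t powr (- n / (4 * q)) + 1"
    define Y where "Y = t powr (- n / 4) * ln (t powr (- n / 4) + 1) powr (- 1 / 2)"
    have BX: "expL2_norm u \<le> ennreal (c * X * (a + b))"
      unfolding c_def X_def by (rule boundX[OF H_pos a(2) b(2) _ AE3 L]) (use t in simp)
    have BY: "expL2_norm u \<le> ennreal (c * Y * (a + b))"
      unfolding c_def Y_def by (rule boundY[OF H_pos a(2) b(2) _ AE2 L]) (use t in simp)
    have kap: "kappa H (real DIM('a)) q t = c * min X Y"
      by (simp add: kappa_def c_def X_def Y_def n_def)
    have "expL2_norm u \<le> ennreal (c * min X Y * (a + b))"
      using BX BY by (cases "X \<le> Y") (auto simp: min_def)
    also have "\<dots> = ennreal (kappa H (real DIM('a)) q t) * (Lp_norm 1 g + Lp_norm (ereal q) g)"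
      using kappa_pos[OF H_pos t, of "real DIM('a)" q] a b
      by (simp add: kap a b ennreal_mult ennreal_plus[symmetric] del: ennreal_plus)
    finally show "expL2_norm (biharm_heat t g)
            \<le> ennreal (kappa H (real DIM('a)) q t) * (Lp_norm 1 g + Lp_norm (ereal q) g)"
      by (simp add: u_def)
  qed
qed

end
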